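(* For every finite set $A$ of positive reals and every integer $\ell\ge0$, \[F^*_\ell(A;t)=\big(F^*_1(A;t)\big)^{\ell}\] as formal power series, where $F^*_\ell(A;t)=\sum_{n\ge0} r_\ell(\mathcal{C}^*_{n,A})\frac{t^n}{n!}$.
   Context: Let $A=\{a_1,\dots,a_m\}$ with $a_1>\dots>a_m>0$. For $n\ge1$, the semiorder-type arrangement $\mathcal{C}^*_{n,A}$ is the arrangement in $\mathbb{R}^n$ of hyperplanes $x_i-x_j=a_k$ ($i\ne j$, $1\le k\le m$). Regions are connected components of the complement of the union of the hyperplanes. The level of $X\subseteq\mathbb{R}^n$ is the smallest integer $\ell\ge0$ such that there are a linear subspace $W$ of dimension $\ell$ and $r>0$ with $X\subseteq\{\bm x:\min_{\bm y\in W}\|\bm x-\bm y\|\le r\}$. $r_\ell(\mathcal{A})$ is the number of regions of $\mathcal{A}$ of level $\ell$. Convention: for $n=0$ there is exactly one region, of level $0$. *)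

theory Defs
  imports "HOL-Analysis.Analysis" "HOL-Computational_Algebra.Formal_Power_Series"
begin

text \<open>Points of R^n are represented as functions nat => real vanishing at all
  indices >= n (coordinates x 0, ..., x (n-1)). The topology is the product
  topology on nat => real (Function_Topology), which restricted to this set is the
  Euclidean topology of R^n.\<close>

definition Rn :: "nat \<Rightarrow> (nat \<Rightarrow> real) set" where
  "Rn n = {x. \<forall>i\<ge>n. x i = 0}"

definition edist :: "nat \<Rightarrow> (nat \<Rightarrow> real) \<Rightarrow> (nat \<Rightarrow> real) \<Rightarrow> real" where
  "edist n x y = sqrt (\<Sum>i<n. (x i - y i)^2)"

definition lincomb :: "nat \<Rightarrow> (nat \<Rightarrow> nat \<Rightarrow> real) \<Rightarrow> (nat \<Rightarrow> real) \<Rightarrow> (nat \<Rightarrow> real)" where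
  "lincomb l v c = (\<lambda>i. \<Sum>j<l. c j * v j i)"

definition is_subspace_dim :: "nat \<Rightarrow> nat \<Rightarrow> (nat \<Rightarrow> real) set \<Rightarrow> bool" where
  "is_subspace_dim n l W \<longleftrightarrow>
     (\<exists>v. (\<forall>j<l. v j \<in> Rn n)
        \<and> (\<forall>c. lincomb l v c = (\<lambda>_. 0) \<longrightarrow> (\<forall>j<l. c j = 0))
        \<and> W = range (lincomb l v))"

text \<open>Level of a subset X of R^n: least l such that X lies within distance r
  of some l-dimensional linear subspace W, for some r > 0
  (min over y in W of the distance is attained, so "min <= r" means some y works).\<close>
definition level :: "nat \<Rightarrow> (nat \<Rightarrow> real) set \<Rightarrow> nat" where
  "level n X = (LEAST l. \<exists>W r. is_subspace_dim n l W \<and> r > 0 \<and>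
                   (\<forall>x\<in>X. \<exists>y\<in>W. edist n x y \<le> r))"

definition semiorder_hyperplanes :: "real set \<Rightarrow> nat \<Rightarrow> (nat \<Rightarrow> real) set set" where
  "semiorder_hyperplanes A n =
     {{x \<in> Rn n. x i - x j = a} | i j a. i < n \<and> j < n \<and> i \<noteq> j \<and> a \<in> A}"

definition complement :: "real set \<Rightarrow> nat \<Rightarrow> (nat \<Rightarrow> real) set" where
  "complement A n = Rn n - \<Union>(semiorder_hyperplanes A n)"

definition regions :: "real set \<Rightarrow> nat \<Rightarrow> (nat \<Rightarrow> real) set set" where
  "regions A n = {connected_component_set (complement A n) x | x. x \<in> complement A n}"

definition r_level :: "real set \<Rightarrow> nat \<Rightarrow> nat \<Rightarrow> nat" where
  "r_level A l n = card {R \<in> regions A n. level n R = l}"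

definition Fstar :: "real set \<Rightarrow> nat \<Rightarrow> real fps" where
  "Fstar A l = Abs_fps (\<lambda>n. of_nat (r_level A l n) / fact n)"

end

theory Submission imports Defs begin

locale semi =
  fixes A :: "real set" and b :: real
  assumes finA: "finite A" and bA: "b \<in> A" and Apos: "\<And>a. a \<in> A \<Longrightarrow> 0 < a \<and> a \<le> b"
begin

lemma bpos: "b > 0" using Apos bA by auto

definition gd :: "nat set \<Rightarrow> (nat\<Rightarrow>real) \<Rightarrow> bool" where
  "gd I x \<longleftrightarrow> (\<forall>i\<in>I. \<forall>j\<in>I. i \<noteq> j \<longrightarrow> x i - x j \<notin> A)"

definition pat :: "nat set \<Rightarrow> (nat\<Rightarrow>real) \<Rightarrow> (nat\<times>nat\<times>real) set" where
  "pat I x = {(i,j,a). i\<in>I \<and> j\<in>I \<and> i\<noteq>j \<and> a\<in>A \<and> x i - x j > a}"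

definition sep :: "(nat\<Rightarrow>real) \<Rightarrow> nat set \<Rightarrow> nat set \<Rightarrow> bool" where
  "sep x I U \<longleftrightarrow> (\<forall>i\<in>U. \<forall>j\<in>I-U. x i - x j > b)"

definition top :: "(nat\<Rightarrow>real) \<Rightarrow> nat set \<Rightarrow> nat set" where
  "top x I = \<Inter>{U. U \<subseteq> I \<and> U \<noteq> {} \<and> sep x I U}"

fun Tseq :: "(nat\<Rightarrow>real) \<Rightarrow> nat set \<Rightarrow> nat \<Rightarrow> nat set" where
  "Tseq x I 0 = I"
| "Tseq x I (Suc m) = Tseq x I m - top x (Tseq x I m)"

definition clus :: "(nat\<Rightarrow>real) \<Rightarrow> nat set \<Rightarrow> nat \<Rightarrow> bool" where
  "clus x I k \<longleftrightarrow> Tseq x I k = {} \<and> (\<forall>m<k. Tseq x I m \<noteq> {})"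

lemma sep_chain:
  assumes "sep x I U" "sep x I V" "U \<subseteq> I" "V \<subseteq> I"
  shows "U \<subseteq> V \<or> V \<subseteq> U"
proof (rule ccontr)
  assume "\<not> ?thesis"
  then obtain u v where "u \<in> U" "u \<notin> V" "v \<in> V" "v \<notin> U" by blast
  with assms have "x u - x v > b" "x v - x u > b" unfolding sep_def by auto
  with bpos show False by linarith
qed

lemma top_props:
  assumes "finite I" "I \<noteq> {}"
  shows "top x I \<subseteq> I" "top x I \<noteq> {}" "sep x I (top x I)"
    "\<And>U. U \<subseteq> I \<Longrightarrow> U \<noteq> {} \<Longrightarrow> sep x I U \<Longrightarrow> top x I \<subseteq> U"
proof -
  let ?F = "{U. U \<subseteq> I \<and> U \<noteq> {} \<and> sep x I U}"
  have IF: "I \<in> ?F" using assms(2) by (auto simp: sep_def)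
  obtain U0 where U0: "U0 \<in> ?F" "\<And>V. V \<in> ?F \<Longrightarrow> card U0 \<le> card V"
    using ex_has_least_nat[of "\<lambda>U. U \<in> ?F" I card] IF by blast
  have sub: "U0 \<subseteq> V" if "V \<in> ?F" for V
  proof -
    have "U0 \<subseteq> V \<or> V \<subseteq> U0" using sep_chain[of x I U0 V] U0(1) that by auto
    moreover have "finite U0" using U0(1) assms(1) by (auto intro: finite_subset[of U0 I])
    moreover have "V \<subseteq> U0 \<Longrightarrow> V = U0" using card_seteq[OF \<open>finite U0\<close> _ U0(2)[OF that]] by blast
    ultimately show ?thesis by blast
  qed
  have eq: "top x I = U0" unfolding top_def using sub U0(1) by blast
  show "top x I \<subseteq> I" "top x I \<noteq> {}" "sep x I (top x I)" using eq U0(1) by auto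
  show "\<And>U. U \<subseteq> I \<Longrightarrow> U \<noteq> {} \<Longrightarrow> sep x I U \<Longrightarrow> top x I \<subseteq> U" using eq sub by auto
qed

lemma pat_iff: "pat I x = pat I y \<Longrightarrow> i \<in> I \<Longrightarrow> j \<in> I \<Longrightarrow> i \<noteq> j \<Longrightarrow> a \<in> A
  \<Longrightarrow> (x i - x j > a \<longleftrightarrow> y i - y j > a)"
  unfolding pat_def by (auto simp: set_eq_iff)

lemma pat_sep: "pat I x = pat I y \<Longrightarrow> J \<subseteq> I \<Longrightarrow> U \<subseteq> J \<Longrightarrow> sep x J U = sep y J U"
proof -
  assume h: "pat I x = pat I y" "J \<subseteq> I" "U \<subseteq> J"
  have "\<And>i j. i \<in> U \<Longrightarrow> j \<in> J - U \<Longrightarrow> (x i - x j > b \<longleftrightarrow> y i - y j > b)"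
  proof -
    fix i j assume "i \<in> U" "j \<in> J - U"
    then show "(x i - x j > b \<longleftrightarrow> y i - y j > b)"
      using pat_iff[OF h(1), of i j b] bA h(2,3) by auto
  qed
  then show ?thesis unfolding sep_def by auto
qed

lemma pat_top: "pat I x = pat I y \<Longrightarrow> J \<subseteq> I \<Longrightarrow> top x J = top y J"
proof -
  assume h: "pat I x = pat I y" "J \<subseteq> I"
  have "{U. U \<subseteq> J \<and> U \<noteq> {} \<and> sep x J U} = {U. U \<subseteq> J \<and> U \<noteq> {} \<and> sep y J U}"
    using pat_sep[OF h] by auto
  then show ?thesis unfolding top_def by simp
qed

lemma Tseq_sub: "Tseq x I m \<subseteq> I"
  by (induction m) auto

lemma pat_Tseq: "pat I x = pat I y \<Longrightarrow> Tseq x I m = Tseq y I m"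
proof (induction m)
  case (Suc m)
  have "top x (Tseq y I m) = top y (Tseq y I m)" using pat_top[OF Suc.prems Tseq_sub] .
  then show ?case using Suc by simp
qed simp

lemma pat_clus: "pat I x = pat I y \<Longrightarrow> clus x I k = clus y I k"
proof -
  assume h: "pat I x = pat I y"
  show ?thesis unfolding clus_def using pat_Tseq[OF h] by presburger
qed

lemma eqon_pat: "(\<And>i. i \<in> I \<Longrightarrow> x i = y i) \<Longrightarrow> pat I x = pat I y"
  unfolding pat_def by auto

lemma pat_restr: "J \<subseteq> I \<Longrightarrow> pat J x = {(i,j,a) \<in> pat I x. i \<in> J \<and> j \<in> J}"
  unfolding pat_def by auto

lemma pat_sub: "pat I x \<subseteq> I \<times> I \<times> A"
  unfolding pat_def by auto

lemma Tseq_dec: "Tseq x I (Suc m) \<subseteq> Tseq x I m"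
  by simp

lemma Tseq_anti: "m \<le> m' \<Longrightarrow> Tseq x I m' \<subseteq> Tseq x I m"
proof (induction m' rule: dec_induct)
  case (step n)
  then show ?case using Tseq_dec[of x I n] by blast
qed simp

lemma top_empty: "top x {} = UNIV"
  unfolding top_def by auto

lemma Tseq_card: "finite I \<Longrightarrow> card (Tseq x I m) \<le> card I - m"
proof (induction m)
  case 0 then show ?case by simp
next
  case (Suc m)
  show ?case
  proof (cases "Tseq x I m = {}")
    case True then show ?thesis by (simp add: top_empty)
  next
    case False
    have fin: "finite (Tseq x I m)" by (rule finite_subset[OF Tseq_sub Suc.prems])
    have "top x (Tseq x I m) \<noteq> {}" "top x (Tseq x I m) \<subseteq> Tseq x I m"
      using top_props[OF fin False, where x=x] by auto
    then have "card (Tseq x I (Suc m)) < card (Tseq x I m)"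
    proof -
      have "Tseq x I (Suc m) \<subset> Tseq x I m" using \<open>top x (Tseq x I m) \<noteq> {}\<close> \<open>top x (Tseq x I m) \<subseteq> Tseq x I m\<close> by auto
      then show ?thesis using fin psubset_card_mono by blast
    qed
    moreover have "card (Tseq x I m) \<le> card I - m" by (rule Suc.IH[OF Suc.prems])
    ultimately show ?thesis by linarith
  qed
qed

lemma Tseq_end: "finite I \<Longrightarrow> Tseq x I (card I) = {}"
proof -
  assume f: "finite I"
  have "card (Tseq x I (card I)) = 0" using Tseq_card[OF f, of x "card I"] by simp
  moreover have "finite (Tseq x I (card I))" by (rule finite_subset[OF Tseq_sub f])
  ultimately show ?thesis by simp
qed

lemma Tseq_empty_mono: "Tseq x I m = {} \<Longrightarrow> m \<le> m' \<Longrightarrow> Tseq x I m' = {}"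
  using Tseq_anti by blast

lemma clus_ex: "finite I \<Longrightarrow> \<exists>k. clus x I k"
proof -
  assume fin: "finite I"
  define k where "k = (LEAST m. Tseq x I m = {})"
  have "Tseq x I k = {}" unfolding k_def by (rule LeastI[of _ "card I"]) (rule Tseq_end[OF fin])
  moreover have "\<forall>m<k. Tseq x I m \<noteq> {}" unfolding k_def using not_less_Least by blast
  ultimately show ?thesis unfolding clus_def by blast
qed

lemma clus_unique: "clus x I k \<Longrightarrow> clus x I k' \<Longrightarrow> k = k'"
  unfolding clus_def unfolding clus_def by (metis linorder_neqE_nat)

lemma Tseq_shift: "Tseq x I (Suc m) = Tseq x (I - top x I) m"
  by (induction m) auto

lemma clus_Suc: "clus x I (Suc l) \<longleftrightarrow> I \<noteq> {} \<and> clus x (I - top x I) l"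
proof -
  have all: "\<And>P. (\<forall>m<Suc l. P m) \<longleftrightarrow> P 0 \<and> (\<forall>m<l. P (Suc m))"
    by (auto simp: less_Suc_eq_0_disj)
  show ?thesis unfolding clus_def using all[of "\<lambda>m. Tseq x I m \<noteq> {}"] Tseq_shift[of x I]
    by (auto simp del: Tseq.simps simp add: Tseq.simps(1))
qed

lemma clus_0: "clus x I 0 \<longleftrightarrow> I = {}"
  unfolding clus_def by simp

lemma clus_1: "finite I \<Longrightarrow> clus x I 1 \<longleftrightarrow> I \<noteq> {} \<and> top x I = I"
proof -
  assume f: "finite I"
  show ?thesis
  proof (cases "I = {}")
    case False
    note tp = top_props[OF f False, where x=x]
    show ?thesis unfolding clus_def using tp(1) False by auto
  qed (simp add: clus_def)
qed

lemma lower_Tseq: "finite I \<Longrightarrow> i \<in> I - Tseq x I m \<Longrightarrow> j \<in> Tseq x I m \<Longrightarrow> x i - x j > b"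
proof (induction m arbitrary: i j)
  case 0 then show ?case by simp
next
  case (Suc m)
  let ?T = "Tseq x I m"
  have jT: "j \<in> ?T" "j \<notin> top x ?T" using Suc.prems by auto
  show ?case
  proof (cases "i \<in> ?T")
    case False
    then show ?thesis using Suc.IH[of i j] Suc.prems jT by auto
  next
    case True
    have ne: "?T \<noteq> {}" using True by auto
    have fin: "finite ?T" by (rule finite_subset[OF Tseq_sub Suc.prems(1)])
    have "i \<in> top x ?T" using True Suc.prems by auto
    then show ?thesis using top_props(3)[OF fin ne] jT unfolding sep_def by auto
  qed
qed


lemma gd_mono: "J \<subseteq> I \<Longrightarrow> gd I x \<Longrightarrow> gd J x"
  unfolding gd_def by blast

lemma top_unique:
  assumes "finite I" "T \<subseteq> I" "T \<noteq> {}" "sep x I T"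
    "\<And>U. U \<subseteq> I \<Longrightarrow> U \<noteq> {} \<Longrightarrow> sep x I U \<Longrightarrow> T \<subseteq> U"
  shows "top x I = T"
proof -
  have ne: "I \<noteq> {}" using assms(2,3) by blast
  note tp = top_props[OF assms(1) ne, where x=x]
  have "top x I \<subseteq> T" by (rule tp(4)[OF assms(2,3,4)])
  moreover have "T \<subseteq> top x I" by (rule assms(5)[OF tp(1,2,3)])
  ultimately show ?thesis by (rule antisym)
qed

lemma top_top:
  assumes "finite I" "I \<noteq> {}"
  shows "top x (top x I) = top x I"
proof -
  let ?T = "top x I"
  note tp = top_props[OF assms, where x=x]
  have finT: "finite ?T" by (rule finite_subset[OF tp(1) assms(1)])
  show ?thesis
  proof (rule top_unique[OF finT order_refl tp(2)])
    show "sep x ?T ?T" unfolding sep_def by simp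
    fix U assume U: "U \<subseteq> ?T" "U \<noteq> {}" "sep x ?T U"
    have "sep x I U" unfolding sep_def
    proof (intro ballI)
      fix i j assume ij: "i \<in> U" "j \<in> I - U"
      show "x i - x j > b"
      proof (cases "j \<in> ?T")
        case True then show ?thesis using U(3) ij unfolding sep_def by blast
      next
        case False then show ?thesis using tp(3) ij U(1) unfolding sep_def by blast
      qed
    qed
    moreover have "U \<subseteq> I" using U(1) tp(1) by (rule order_trans)
    ultimately show "?T \<subseteq> U" using tp(4)[of U] U(2) by blast
  qed
qed

definition Q :: "nat set \<Rightarrow> nat \<Rightarrow> (nat\<times>nat\<times>real) set set" where
  "Q I l = {pat I x | x. gd I x \<and> clus x I l}"

lemma Q_sub: "Q I l \<subseteq> Pow (I \<times> I \<times> A)"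
  unfolding Q_def pat_def by auto

lemma Q_fin: "finite I \<Longrightarrow> finite (Q I l)"
proof -
  assume "finite I"
  then have "finite (Pow (I \<times> I \<times> A))" using finA by simp
  then show ?thesis using Q_sub[of I l] by (rule finite_subset[rotated])
qed

definition rs :: "nat set \<Rightarrow> (nat\<times>nat\<times>real) set \<Rightarrow> (nat\<times>nat\<times>real) set" where
  "rs J p = {(i,j,a) \<in> p. i \<in> J \<and> j \<in> J}"

lemma rs_pat: "J \<subseteq> I \<Longrightarrow> rs J (pat I x) = pat J x"
  unfolding rs_def pat_def by auto

definition tp :: "nat set \<Rightarrow> (nat\<times>nat\<times>real) set \<Rightarrow> nat set" where
  "tp I p = top (SOME x. gd I x \<and> pat I x = p) I"

lemma tp_eq: "gd I x \<Longrightarrow> tp I (pat I x) = top x I"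
proof -
  assume g: "gd I x"
  let ?y = "SOME y. gd I y \<and> pat I y = pat I x"
  have "gd I ?y \<and> pat I ?y = pat I x" by (rule someI[of _ x]) (use g in simp)
  then show ?thesis unfolding tp_def using pat_top[of I ?y x I] by simp
qed

lemma cross:
  assumes "finite I" "I \<noteq> {}" "i \<in> I" "j \<in> I"
  shows "(i,j,a) \<in> pat I x \<longleftrightarrow>
     (i,j,a) \<in> rs (I - top x I) (pat I x) \<or> (i,j,a) \<in> rs (top x I) (pat I x)
     \<or> (i \<in> top x I \<and> j \<notin> top x I \<and> a \<in> A)"
proof -
  note tp = top_props[OF assms(1,2), where x=x]
  show ?thesis
  proof (cases "i \<in> top x I \<longleftrightarrow> j \<in> top x I")
    case True then show ?thesis unfolding rs_def using assms by auto
  next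
    case False
    then consider "i \<in> top x I" "j \<notin> top x I" | "j \<in> top x I" "i \<notin> top x I" by blast
    then show ?thesis
    proof cases
      case 1
      then have "x i - x j > b" using tp(3) assms unfolding sep_def by blast
      then show ?thesis using 1 Apos[of a] assms unfolding pat_def rs_def by auto
    next
      case 2
      then have "x j - x i > b" using tp(3) assms unfolding sep_def by blast
      then show ?thesis using 2 Apos[of a] bpos assms unfolding pat_def rs_def by auto
    qed
  qed
qed

definition phi :: "nat set \<Rightarrow> (nat\<times>nat\<times>real) set \<Rightarrow> nat set \<times> (nat\<times>nat\<times>real) set \<times> (nat\<times>nat\<times>real) set" where
  "phi I p = (tp I p, rs (I - tp I p) p, rs (tp I p) p)"

lemma glue:
  assumes finI: "finite I" and SI: "S \<subseteq> I" and gy: "gd (I - S) y" and gz: "gd S z"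
    and tz: "top z S = S" and Sne: "S \<noteq> {}"
  shows "\<exists>x. gd I x \<and> (\<forall>i\<in>I-S. x i = y i) \<and> pat S x = pat S z \<and> top x I = S"
proof -
  define C where "C = b + 1 + (\<Sum>i\<in>I. \<bar>y i\<bar>) + (\<Sum>i\<in>I. \<bar>z i\<bar>)"
  define x where "x = (\<lambda>i. if i \<in> S then z i + C else y i)"
  have big: "x i - x j > b" if "i \<in> S" "j \<in> I - S" for i j
  proof -
    have "\<bar>z i\<bar> \<le> (\<Sum>i\<in>I. \<bar>z i\<bar>)" using that SI finI by (intro member_le_sum) auto
    moreover have "\<bar>y j\<bar> \<le> (\<Sum>i\<in>I. \<bar>y i\<bar>)" using that finI by (intro member_le_sum) auto
    ultimately show ?thesis using that unfolding x_def C_def by auto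
  qed
  have sepS: "sep x I S" unfolding sep_def using big by blast
  have gdx: "gd I x" unfolding gd_def
  proof (intro ballI impI)
    fix i j assume ij: "i \<in> I" "j \<in> I" "i \<noteq> j"
    show "x i - x j \<notin> A"
    proof (cases "i \<in> S"; cases "j \<in> S")
      assume "i \<in> S" "j \<in> S" then show ?thesis using gz ij unfolding gd_def x_def by auto
    next
      assume "i \<notin> S" "j \<notin> S" then show ?thesis using gy ij unfolding gd_def x_def by auto
    next
      assume "i \<in> S" "j \<notin> S" then have "x i - x j > b" using big ij by blast
      then show ?thesis using Apos by force
    next
      assume "i \<notin> S" "j \<in> S" then have "x j - x i > b" using big ij by blast
      then show ?thesis using Apos bpos by force
    qed
  qed
  have patS: "pat S x = pat S z" unfolding pat_def x_def by auto
  have "top x I = S"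
  proof (rule top_unique[OF finI SI Sne sepS])
    fix U assume U: "U \<subseteq> I" "U \<noteq> {}" "sep x I U"
    have "top x I \<subseteq> U" using top_props(4)[OF finI _ U] U by blast
    have t: "top x I \<subseteq> S" "top x I \<noteq> {}" "sep x I (top x I)"
      using top_props[OF finI, where x=x] Sne SI sepS by blast+
    have "sep z S (top x I)" unfolding sep_def
    proof (intro ballI)
      fix i j assume ij: "i \<in> top x I" "j \<in> S - top x I"
      then have "x i - x j > b" using t(3) SI unfolding sep_def by blast
      moreover have "x i = z i + C" "x j = z j + C" using ij t(1) by (auto simp: x_def)
      ultimately show "z i - z j > b" by simp
    qed
    then have "top z S \<subseteq> top x I" using top_props(4)[OF finite_subset[OF SI finI] Sne] t by blast
    then show "S \<subseteq> U" using tz \<open>top x I \<subseteq> U\<close> by blast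
  qed
  then show ?thesis using gdx patS unfolding x_def by auto
qed

lemma Q_rec:
  assumes finI: "finite I"
  shows "card (Q I (Suc l)) = (\<Sum>S\<in>Pow I. card (Q (I - S) l) * card (Q S 1))"
proof -
  let ?R = "Sigma (Pow I) (\<lambda>S. Q (I - S) l \<times> Q S 1)"
  have fS: "\<And>S. S \<in> Pow I \<Longrightarrow> finite S" using finI by (auto intro: finite_subset)
  have "bij_betw (phi I) (Q I (Suc l)) ?R"
    unfolding bij_betw_def
  proof (intro conjI)
    show "inj_on (phi I) (Q I (Suc l))"
    proof (rule inj_onI)
      fix p p' assume p: "p \<in> Q I (Suc l)" and p': "p' \<in> Q I (Suc l)" and eq: "phi I p = phi I p'"
      obtain x where x: "p = pat I x" "gd I x" "clus x I (Suc l)" using p unfolding Q_def by blast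
      obtain x' where x': "p' = pat I x'" "gd I x'" "clus x' I (Suc l)" using p' unfolding Q_def by blast
      have ne: "I \<noteq> {}" using x(3) clus_Suc by blast
      have eqT: "top x I = top x' I" using eq unfolding phi_def using tp_eq x x' by auto
      have r1: "rs (I - top x I) p = rs (I - top x I) p'" and r2: "rs (top x I) p = rs (top x I) p'"
        using eq eqT unfolding phi_def using tp_eq x x' by auto
      show "p = p'"
      proof (rule set_eqI)
        fix w :: "nat \<times> nat \<times> real"
        obtain i j a where t: "w = (i,j,a)" by (metis prod_cases3)
        show "w \<in> p \<longleftrightarrow> w \<in> p'"
        proof (cases "i \<in> I \<and> j \<in> I")
          case True
          then show ?thesis using cross[OF finI ne, of i j a x] cross[OF finI ne, of i j a x'] eqT r1 r2 x x' t
            by auto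
        next
          case False then show ?thesis using x x' t unfolding pat_def by auto
        qed
      qed
    qed
  next
    show "phi I ` Q I (Suc l) = ?R"
    proof (intro equalityI subsetI)
      fix q assume "q \<in> phi I ` Q I (Suc l)"
      then obtain x where q: "q = phi I (pat I x)" and x: "gd I x" "clus x I (Suc l)" unfolding Q_def by blast
      have ne: "I \<noteq> {}" and cl: "clus x (I - top x I) l" using x(2) clus_Suc by auto
      note tp = top_props[OF finI ne, where x=x]
      have q': "q = (top x I, pat (I - top x I) x, pat (top x I) x)"
        unfolding q phi_def tp_eq[OF x(1)] using rs_pat tp(1) by auto
      have "pat (I - top x I) x \<in> Q (I - top x I) l" unfolding Q_def using gd_mono[OF _ x(1)] cl by blast
      moreover have "pat (top x I) x \<in> Q (top x I) 1" unfolding Q_def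
        using gd_mono[OF tp(1) x(1)] clus_1[OF finite_subset[OF tp(1) finI]] top_top[OF finI ne] tp(2) by blast
      ultimately show "q \<in> ?R" using q' tp(1) by auto
    next
      fix q assume "q \<in> ?R"
      then obtain S q1 q2 where q: "q = (S, q1, q2)" "S \<subseteq> I" "q1 \<in> Q (I - S) l" "q2 \<in> Q S 1" by auto
      obtain y where y: "q1 = pat (I - S) y" "gd (I - S) y" "clus y (I - S) l" using q(3) unfolding Q_def by blast
      obtain z where z: "q2 = pat S z" "gd S z" "clus z S 1" using q(4) unfolding Q_def by blast
      have finS: "finite S" by (rule finite_subset[OF q(2) finI])
      have zS: "S \<noteq> {}" "top z S = S" using z(3) clus_1[OF finS] by auto
      obtain x where x: "gd I x" "\<forall>i\<in>I-S. x i = y i" "pat S x = pat S z" "top x I = S"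
        using glue[OF finI q(2) y(2) z(2) zS(2) zS(1)] by blast
      have pI: "pat (I - S) x = pat (I - S) y" using x(2) by (intro eqon_pat) auto
      have "clus x (I - S) l" using pat_clus[OF pI] y(3) by simp
      then have "clus x I (Suc l)" using clus_Suc x(4) zS(1) q(2) by auto
      then have "pat I x \<in> Q I (Suc l)" unfolding Q_def using x(1) by blast
      moreover have "phi I (pat I x) = q"
        unfolding phi_def tp_eq[OF x(1)] x(4) using rs_pat[of "I - S" I x] rs_pat[OF q(2), of x] pI x(3) y(1) z(1) q(1)
        by auto
      ultimately show "q \<in> phi I ` Q I (Suc l)" by blast
    qed
  qed
  then have "card (Q I (Suc l)) = card ?R" by (rule bij_betw_same_card)
  also have "\<dots> = (\<Sum>S\<in>Pow I. card (Q (I - S) l \<times> Q S 1))"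
    using finI by (intro card_SigmaI) (auto intro!: Q_fin finite_cartesian_product simp: fS)
  also have "\<dots> = (\<Sum>S\<in>Pow I. card (Q (I - S) l) * card (Q S 1))"
    by (simp add: card_cartesian_product)
  finally show ?thesis .
qed


lemma sep_h:
  assumes "inj_on h J" "U \<subseteq> J'" "J' \<subseteq> J"
  shows "sep (x \<circ> h) J' U \<longleftrightarrow> sep x (h ` J') (h ` U)"
proof -
  have e: "h ` J' - h ` U = h ` (J' - U)"
    using inj_on_image_set_diff[OF assms(1), of J' U] assms(2,3) by auto
  show ?thesis unfolding sep_def e by auto
qed

lemma top_h:
  assumes inj: "inj_on h J" and sub: "J' \<subseteq> J" and fin: "finite J'" and ne: "J' \<noteq> {}"
  shows "h ` top (x \<circ> h) J' = top x (h ` J')"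
proof -
  note tp = top_props[OF fin ne, where x="x \<circ> h"]
  show ?thesis
  proof (rule sym, rule top_unique)
    show "finite (h ` J')" using fin by simp
    show "h ` top (x \<circ> h) J' \<subseteq> h ` J'" using tp(1) by blast
    show "h ` top (x \<circ> h) J' \<noteq> {}" using tp(2) by blast
    show "sep x (h ` J') (h ` top (x \<circ> h) J')" using sep_h[OF inj tp(1) sub] tp(3) by simp
    fix V assume V: "V \<subseteq> h ` J'" "V \<noteq> {}" "sep x (h ` J') V"
    define U where "U = {j \<in> J'. h j \<in> V}"
    have hU: "h ` U = V" using V(1) unfolding U_def by blast
    have U: "U \<subseteq> J'" "U \<noteq> {}" using hU V(2) unfolding U_def by auto
    have "sep (x \<circ> h) J' U" using sep_h[OF inj U(1) sub] hU V(3) by simp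
    then have "top (x \<circ> h) J' \<subseteq> U" using tp(4) U by blast
    then show "h ` top (x \<circ> h) J' \<subseteq> V" using hU by blast
  qed
qed

lemma Tseq_h:
  assumes inj: "inj_on h J" and fin: "finite J"
  shows "h ` Tseq (x \<circ> h) J m = Tseq x (h ` J) m"
proof (induction m)
  case 0 then show ?case by simp
next
  case (Suc m)
  let ?T = "Tseq (x \<circ> h) J m"
  show ?case
  proof (cases "?T = {}")
    case True
    have e1: "Tseq (x \<circ> h) J (Suc m) = {}" using True by (simp del: o_apply)
    have "Tseq x (h ` J) m = {}" using Suc True by (simp del: o_apply)
    then have e2: "Tseq x (h ` J) (Suc m) = {}" by simp
    show ?thesis using e1 e2 by (simp add: comp_def del: Tseq.simps)
  next
    case False
    have TJ: "?T \<subseteq> J" by (rule Tseq_sub)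
    have finT: "finite ?T" by (rule finite_subset[OF TJ fin])
    note tp = top_props[OF finT False, where x="x \<circ> h"]
    have "h ` (?T - top (x \<circ> h) ?T) = h ` ?T - h ` top (x \<circ> h) ?T"
      using inj_on_image_set_diff[OF inj, of ?T "top (x \<circ> h) ?T"] tp(1) TJ by blast
    also have "\<dots> = Tseq x (h ` J) m - top x (Tseq x (h ` J) m)"
      using top_h[OF inj TJ finT False, of x] Suc by (simp add: comp_def)
    finally show ?thesis by (simp add: comp_def)
  qed
qed

lemma clus_h:
  assumes inj: "inj_on h J" and fin: "finite J"
  shows "clus (x \<circ> h) J l \<longleftrightarrow> clus x (h ` J) l"
  unfolding clus_def using Tseq_h[OF inj fin, of x, symmetric] by (metis image_is_empty)

lemma gd_h: "inj_on h J \<Longrightarrow> gd J (x \<circ> h) \<longleftrightarrow> gd (h ` J) x"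
  unfolding gd_def inj_on_def by auto

lemma pat_h: 
  assumes inj: "inj_on h J"
  shows "(\<lambda>(i,j,a). (h i, h j, a)) ` pat J (x \<circ> h) = pat (h ` J) x"
proof (intro equalityI subsetI)
  fix w assume "w \<in> (\<lambda>(i,j,a). (h i, h j, a)) ` pat J (x \<circ> h)"
  then obtain i j a where "w = (h i, h j, a)" "(i,j,a) \<in> pat J (x \<circ> h)" by auto
  then show "w \<in> pat (h ` J) x" using inj unfolding pat_def inj_on_def by auto
next
  fix w assume "w \<in> pat (h ` J) x"
  then obtain i' j' a where w: "w = (i', j', a)" "i' \<in> h ` J" "j' \<in> h ` J" "i' \<noteq> j'" "a \<in> A" "x i' - x j' > a"
    unfolding pat_def by auto
  then obtain i j where ij: "i \<in> J" "j \<in> J" "i' = h i" "j' = h j" by blast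
  then have "(i,j,a) \<in> pat J (x \<circ> h)" using w unfolding pat_def by auto
  then show "w \<in> (\<lambda>(i,j,a). (h i, h j, a)) ` pat J (x \<circ> h)" using w(1) ij
    by (auto intro!: image_eqI[where x="(i,j,a)"])
qed

lemma Q_h:
  assumes inj: "inj_on h J" and fin: "finite J"
  shows "card (Q (h ` J) l) = card (Q J l)"
proof -
  let ?f = "\<lambda>(i,j,a). (h i, h j, (a::real))"
  have "Q (h ` J) l = image ?f ` Q J l"
  proof (intro equalityI subsetI)
    fix p assume "p \<in> Q (h ` J) l"
    then obtain x where x: "p = pat (h ` J) x" "gd (h ` J) x" "clus x (h ` J) l" unfolding Q_def by blast
    have "pat J (x \<circ> h) \<in> Q J l" unfolding Q_def using x gd_h[OF inj] clus_h[OF inj fin] by blast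
    then show "p \<in> image ?f ` Q J l" using pat_h[OF inj, of x] x(1) by blast
  next
    fix p assume "p \<in> image ?f ` Q J l"
    then obtain y where y: "p = ?f ` pat J y" "gd J y" "clus y J l" unfolding Q_def by blast
    define x where "x = y \<circ> inv_into J h"
    have xy: "\<And>j. j \<in> J \<Longrightarrow> (x \<circ> h) j = y j" unfolding x_def using inv_into_f_f[OF inj] by simp
    have pe: "pat J (x \<circ> h) = pat J y" using xy by (rule eqon_pat)
    have "gd J (x \<circ> h)" using y(2) xy unfolding gd_def by auto
    then have g: "gd (h ` J) x" using gd_h[OF inj] by simp
    have "clus (x \<circ> h) J l" using pat_clus[OF pe] y(3) by simp
    then have c: "clus x (h ` J) l" using clus_h[OF inj fin] by simp
    have "p = pat (h ` J) x" using y(1) pe pat_h[OF inj, of x] by simp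
    then show "p \<in> Q (h ` J) l" unfolding Q_def using g c by blast
  qed
  moreover have "inj_on (image ?f) (Q J l)"
  proof (rule inj_on_subset[OF inj_on_image_Pow Q_sub])
    show "inj_on ?f (J \<times> J \<times> A)" using inj unfolding inj_on_def by auto
  qed
  ultimately show ?thesis by (simp add: card_image)
qed

definition cnt :: "nat \<Rightarrow> nat \<Rightarrow> nat" where
  "cnt l n = card (Q {..<n} l)"

lemma Q_card: "finite S \<Longrightarrow> card (Q S l) = cnt l (card S)"
proof -
  assume f: "finite S"
  obtain h where h: "bij_betw h {0..<card S} S" using ex_bij_betw_nat_finite[OF f] by blast
  have "card (Q (h ` {..<card S}) l) = card (Q {..<card S} l)"
    using h by (intro Q_h) (auto simp: bij_betw_def atLeast0LessThan)
  moreover have "h ` {..<card S} = S" using h by (simp add: bij_betw_def atLeast0LessThan)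
  ultimately show ?thesis unfolding cnt_def by simp
qed

lemma cnt_rec: "cnt (Suc l) n = (\<Sum>k\<le>n. (n choose k) * (cnt l (n - k) * cnt 1 k))"
proof -
  let ?I = "{..<n}"
  let ?f = "\<lambda>k. cnt l (n - k) * cnt 1 k"
  have "cnt (Suc l) n = (\<Sum>S\<in>Pow ?I. card (Q (?I - S) l) * card (Q S 1))"
    unfolding cnt_def by (rule Q_rec) simp
  also have "\<dots> = (\<Sum>S\<in>Pow ?I. ?f (card S))"
  proof (rule sum.cong[OF refl])
    fix S assume S: "S \<in> Pow ?I"
    have fS: "finite S" using S finite_subset by auto
    have "card (?I - S) = n - card S" using S by (simp add: card_Diff_subset fS)
    then show "card (Q (?I - S) l) * card (Q S 1) = ?f (card S)"
      using Q_card[OF fS] Q_card[of "?I - S"] by simp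
  qed
  also have "\<dots> = (\<Sum>k\<in>{..n}. \<Sum>S\<in>{S \<in> Pow ?I. card S = k}. ?f (card S))"
    by (rule sum.group[symmetric]) (auto intro: card_mono[of ?I, simplified])
  also have "\<dots> = (\<Sum>k\<le>n. (n choose k) * ?f k)"
  proof (rule sum.cong[OF refl])
    fix k
    have "(\<Sum>S\<in>{S \<in> Pow ?I. card S = k}. ?f (card S)) = (\<Sum>S\<in>{S \<in> Pow ?I. card S = k}. ?f k)"
      by (rule sum.cong) auto
    also have "\<dots> = card {S. S \<subseteq> ?I \<and> card S = k} * ?f k" by (simp add: Pow_def)
    also have "\<dots> = (n choose k) * ?f k" using n_subsets[of ?I k] by simp
    finally show "(\<Sum>S\<in>{S \<in> Pow ?I. card S = k}. ?f (card S)) = (n choose k) * ?f k" .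
  qed
  finally show ?thesis .
qed

lemma cnt_0: "cnt 0 n = (if n = 0 then 1 else 0)"
proof (cases "n = 0")
  case True
  have "Q {..<n} 0 = {{}}" unfolding Q_def using True by (auto simp: gd_def pat_def clus_0)
  then show ?thesis unfolding cnt_def using True by simp
next
  case False
  have "Q {..<n} 0 = {}" unfolding Q_def using False by (auto simp: clus_0)
  then show ?thesis unfolding cnt_def using False by simp
qed

definition Fc :: "nat \<Rightarrow> real fps" where
  "Fc l = Abs_fps (\<lambda>n. of_nat (cnt l n) / fact n)"

lemma Fc_0: "Fc 0 = 1"
  by (rule fps_ext) (simp add: Fc_def cnt_0)

lemma Fc_Suc: "Fc (Suc l) = Fc l * Fc 1"
proof (rule fps_ext)
  fix n
  have "fps_nth (Fc l * Fc 1) n = (\<Sum>i=0..n. of_nat (cnt l i) / fact i * (of_nat (cnt 1 (n - i)) / fact (n - i)))"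
    by (simp add: fps_mult_nth Fc_def)
  also have "\<dots> = (\<Sum>i=0..n. of_nat (cnt l (n - i)) / fact (n - i) * (of_nat (cnt 1 (n - (n - i))) / fact (n - (n - i))))"
    using sum.atLeastAtMost_rev[of "\<lambda>i. of_nat (cnt l i) / fact i * (of_nat (cnt 1 (n - i)) / fact (n - i)) :: real" 0 n]
    by simp
  also have "\<dots> = (\<Sum>k\<le>n. of_nat ((n choose k) * (cnt l (n - k) * cnt 1 k)) / fact n)"
    unfolding atLeast0AtMost
  proof (rule sum.cong[OF refl])
    fix k assume "k \<in> {..n}"
    then have k: "k \<le> n" by simp
    have "(of_nat (n choose k) :: real) = fact n / (fact k * fact (n - k))" by (rule binomial_fact[OF k])
    then show "of_nat (cnt l (n - k)) / fact (n - k) * (of_nat (cnt 1 (n - (n - k))) / fact (n - (n - k))) =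
        of_nat ((n choose k) * (cnt l (n - k) * cnt 1 k)) / (fact n :: real)"
    proof -
      have nk: "n - (n - k) = k" using k by simp
      have "(fact n :: real) \<noteq> 0" "(fact k :: real) \<noteq> 0" "(fact (n-k) :: real) \<noteq> 0" by simp_all
      have alg: "\<And>a b f kk m :: real. f \<noteq> 0 \<Longrightarrow> kk \<noteq> 0 \<Longrightarrow> m \<noteq> 0 \<Longrightarrow>
          a / m * (b / kk) = f / (kk * m) * (a * b) / f"
        by (simp add: field_simps)
      show ?thesis unfolding nk of_nat_mult \<open>(of_nat (n choose k) :: real) = _\<close>
        by (rule alg) (use \<open>(fact n :: real) \<noteq> 0\<close> in simp_all)
    qed
  qed
  also have "\<dots> = of_nat (cnt (Suc l) n) / fact n"
    by (simp only: cnt_rec of_nat_sum sum_divide_distrib)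
  finally show "fps_nth (Fc (Suc l)) n = fps_nth (Fc l * Fc 1) n" by (simp add: Fc_def)
qed

lemma Fc_pow: "Fc l = Fc 1 ^ l"
proof (induction l)
  case 0 then show ?case by (simp only: Fc_0 power_0)
next
  case (Suc l)
  have "Fc (Suc l) = Fc l * Fc 1" by (rule Fc_Suc)
  also have "\<dots> = Fc 1 ^ Suc l" by (simp only: Suc power_Suc2)
  finally show ?case .
qed


lemma compl_eq: "complement A n = {x \<in> Rn n. gd {..<n} x}"
  unfolding complement_def semiorder_hyperplanes_def gd_def by auto

definition K :: "nat \<Rightarrow> (nat \<Rightarrow> real) \<Rightarrow> (nat \<Rightarrow> real) set" where
  "K n x = {y \<in> complement A n. pat {..<n} y = pat {..<n} x}"

lemma conv_gt: "0 \<le> t \<Longrightarrow> t \<le> 1 \<Longrightarrow> u > a \<Longrightarrow> v > a \<Longrightarrow> (1 - t) * u + t * v > (a::real)"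
proof -
  assume h: "0 \<le> t" "t \<le> 1" "u > a" "v > a"
  have e: "(1 - t) * u + t * v - a = (1 - t) * (u - a) + t * (v - a)" by algebra
  have "(1 - t) * (u - a) + t * (v - a) > 0"
  proof (cases "t = 0")
    case True then show ?thesis using h by simp
  next
    case False
    then have "t * (v - a) > 0" using h by simp
    moreover have "(1 - t) * (u - a) \<ge> 0" using h by simp
    ultimately show ?thesis by linarith
  qed
  then show ?thesis using e by linarith
qed

lemma conv_lt: "0 \<le> t \<Longrightarrow> t \<le> 1 \<Longrightarrow> u < a \<Longrightarrow> v < a \<Longrightarrow> (1 - t) * u + t * v < (a::real)"
proof -
  assume h: "0 \<le> t" "t \<le> 1" "u < a" "v < a"
  have "(1 - t) * (-u) + t * (-v) > -a" by (rule conv_gt) (use h in auto)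
  moreover have "(1 - t) * u + t * v = -((1 - t) * (-u) + t * (-v))" by algebra
  ultimately show ?thesis by linarith
qed

lemma sep_component:
  assumes T: "connected T" "T \<subseteq> complement A n" and xy: "x \<in> T" "y \<in> T"
    and ij: "i < n" "j < n" "i \<noteq> j" and a: "a \<in> A" and gt: "x i - x j > a"
  shows "y i - y j > a"
proof (rule ccontr)
  assume "\<not> ?thesis"
  moreover have "y i - y j \<noteq> a" using xy(2) T(2) ij a unfolding compl_eq gd_def by auto
  ultimately have lt: "y i - y j - a < 0" by linarith
  let ?f = "\<lambda>z::nat\<Rightarrow>real. z i - z j - a"
  have "continuous_on T ?f"
    by (intro continuous_intros continuous_on_subset[OF continuous_on_product_coordinates]) auto
  then have "connected (?f ` T)" using T(1) by (rule connected_continuous_image)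
  moreover have "?f x \<in> ?f ` T" "?f y \<in> ?f ` T" using xy by auto
  ultimately have "0 \<in> ?f ` T" unfolding connected_iff_interval using gt lt
    by (metis (no_types, lifting) diff_gt_0_iff_gt less_eq_real_def)
  then obtain z where "z \<in> T" "z i - z j = a" by auto
  then show False using T(2) ij a unfolding compl_eq gd_def by auto
qed

lemma comp_eq:
  assumes x: "x \<in> complement A n"
  shows "connected_component_set (complement A n) x = K n x"
proof (intro equalityI subsetI)
  fix y assume "y \<in> connected_component_set (complement A n) x"
  then obtain T where T: "connected T" "T \<subseteq> complement A n" "x \<in> T" "y \<in> T"
    unfolding connected_component_def by auto
  have "pat {..<n} y = pat {..<n} x"
  proof (rule set_eqI)
    fix w :: "nat \<times> nat \<times> real"
    obtain i j a where w: "w = (i, j, a)" by (metis prod_cases3)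
    have "(i < n \<and> j < n \<and> i \<noteq> j \<and> a \<in> A \<and> y i - y j > a) \<longleftrightarrow> (i < n \<and> j < n \<and> i \<noteq> j \<and> a \<in> A \<and> x i - x j > a)"
      using sep_component[OF T(1,2,3,4), of i j a] sep_component[OF T(1,2,4,3), of i j a] by blast
    then show "w \<in> pat {..<n} y \<longleftrightarrow> w \<in> pat {..<n} x" unfolding w pat_def by simp
  qed
  then show "y \<in> K n x" unfolding K_def using T by auto
next
  fix y assume y: "y \<in> K n x"
  then have yc: "y \<in> complement A n" and py: "pat {..<n} y = pat {..<n} x" unfolding K_def by auto
  define g where "g = (\<lambda>t::real. \<lambda>i. (1 - t) * x i + t * y i)"
  have cont: "continuous_on {0..1} g" unfolding g_def
    by (rule continuous_on_coordinatewise_then_product) (intro continuous_intros)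
  have "connected (g ` {0..1})" by (rule connected_continuous_image[OF cont connected_Icc])
  moreover have "g ` {0..1} \<subseteq> complement A n"
  proof
    fix z assume "z \<in> g ` {0..1}"
    then obtain t where t: "0 \<le> t" "t \<le> 1" "z = g t" by auto
    have "z \<in> Rn n" using x yc t unfolding compl_eq Rn_def g_def by auto
    moreover have "gd {..<n} z" unfolding gd_def
    proof (intro ballI impI)
      fix i j assume ij: "i \<in> {..<n}" "j \<in> {..<n}" "i \<noteq> j"
      have zd: "z i - z j = (1 - t) * (x i - x j) + t * (y i - y j)" unfolding t g_def by algebra
      show "z i - z j \<notin> A"
      proof
        assume a: "z i - z j \<in> A"
        let ?a = "z i - z j"
        have "x i - x j \<notin> A" "y i - y j \<notin> A" using x yc ij unfolding compl_eq gd_def by auto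
        then have nx: "x i - x j \<noteq> ?a" and ny: "y i - y j \<noteq> ?a" using a by fastforce+
        have iff: "x i - x j > ?a \<longleftrightarrow> y i - y j > ?a" using pat_iff[OF py, of i j ?a] ij a by auto
        show False
        proof (cases "x i - x j > ?a")
          case True
          have "y i - y j > ?a" using True iff by blast
          then have "(1 - t) * (x i - x j) + t * (y i - y j) > ?a" by (rule conv_gt[OF t(1,2) True])
          then show False using zd by linarith
        next
          case False
          then have l1: "x i - x j < ?a" using nx by linarith
          have "\<not> y i - y j > ?a" using False iff by blast
          then have l2: "y i - y j < ?a" using ny by linarith
          have "(1 - t) * (x i - x j) + t * (y i - y j) < ?a" by (rule conv_lt[OF t(1,2) l1 l2])
          then show False using zd by linarith
        qed
      qed
    qed
    ultimately show "z \<in> complement A n" unfolding compl_eq by auto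
  qed
  moreover have "x \<in> g ` {0..1}" by (rule image_eqI[of _ _ 0]) (auto simp: g_def)
  moreover have "y \<in> g ` {0..1}" by (rule image_eqI[of _ _ 1]) (auto simp: g_def)
  ultimately show "y \<in> connected_component_set (complement A n) x"
    unfolding connected_component_def by blast
qed


lemma homog:
  fixes a :: "nat \<Rightarrow> nat \<Rightarrow> real"
  assumes "finite J" "l < card J"
  shows "\<exists>c. (\<exists>j\<in>J. c j \<noteq> 0) \<and> (\<forall>i<l. (\<Sum>j\<in>J. a i j * c j) = 0)"
  using assms
proof (induction l arbitrary: J a)
  case 0
  then have "J \<noteq> {}" by auto
  then show ?case by (intro exI[of _ "\<lambda>_. 1"]) auto
next
  case (Suc l)
  show ?case
  proof (cases "\<forall>j\<in>J. a l j = 0")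
    case True
    obtain c where c: "\<exists>j\<in>J. c j \<noteq> 0" "\<forall>i<l. (\<Sum>j\<in>J. a i j * c j) = 0"
      using Suc.IH[OF Suc.prems(1), of a] Suc.prems(2) by auto
    have "\<forall>i<Suc l. (\<Sum>j\<in>J. a i j * c j) = 0"
    proof (intro allI impI)
      fix i assume "i < Suc l"
      then consider "i < l" | "i = l" by linarith
      then show "(\<Sum>j\<in>J. a i j * c j) = 0" using c(2) True by cases auto
    qed
    then show ?thesis using c(1) by blast
  next
    case False
    then obtain p where p: "p \<in> J" "a l p \<noteq> 0" by blast
    let ?J = "J - {p}"
    define b' where "b' = (\<lambda>i j. a i j - a i p * a l j / a l p)"
    have fJ: "finite ?J" using Suc.prems(1) by simp
    have cJ: "l < card ?J" using Suc.prems(2) p(1) by simp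
    obtain d where d: "\<exists>j\<in>?J. d j \<noteq> 0" "\<forall>i<l. (\<Sum>j\<in>?J. b' i j * d j) = 0"
      using Suc.IH[OF fJ cJ, of b'] by blast
    define S where "S = (\<Sum>j\<in>?J. a l j * d j)"
    define c where "c = d(p := - S / a l p)"
    have sumc: "(\<Sum>j\<in>J. a i j * c j) = a i p * (- S / a l p) + (\<Sum>j\<in>?J. a i j * d j)" for i
    proof -
      have "(\<Sum>j\<in>J. a i j * c j) = a i p * c p + (\<Sum>j\<in>?J. a i j * c j)"
        using sum.remove[OF Suc.prems(1) p(1)] by blast
      moreover have "(\<Sum>j\<in>?J. a i j * c j) = (\<Sum>j\<in>?J. a i j * d j)"
        by (rule sum.cong) (auto simp: c_def)
      ultimately show ?thesis by (simp add: c_def)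
    qed
    have "\<forall>i<Suc l. (\<Sum>j\<in>J. a i j * c j) = 0"
    proof (intro allI impI)
      fix i assume "i < Suc l"
      then consider "i < l" | "i = l" by linarith
      then show "(\<Sum>j\<in>J. a i j * c j) = 0"
      proof cases
        case 1
        have "(\<Sum>j\<in>?J. b' i j * d j) = (\<Sum>j\<in>?J. a i j * d j) - a i p / a l p * S"
          unfolding b'_def S_def
          by (simp add: left_diff_distrib sum_subtractf sum_distrib_left mult.assoc)
        then show ?thesis using d(2) 1 sumc[of i] by simp
      next
        case 2
        then show ?thesis using sumc[of i] p(2) unfolding S_def by simp
      qed
    qed
    moreover have "\<exists>j\<in>J. c j \<noteq> 0" using d(1) unfolding c_def by auto
    ultimately show ?thesis by blast
  qed
qed

lemma ex_step: "P 0 \<Longrightarrow> \<not> P k \<Longrightarrow> \<exists>m<k. P m \<and> \<not> P (Suc m)"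
proof (induction k)
  case 0 then show ?case by simp
next
  case (Suc k)
  then show ?case by (cases "P k") (auto intro: less_SucI)
qed

lemma gap:
  fixes z :: "nat \<Rightarrow> real"
  assumes "finite G"
    and Q: "\<And>c. (\<exists>i\<in>G. c \<le> z i) \<Longrightarrow> (\<exists>j\<in>G. z j < c) \<Longrightarrow> (\<exists>i\<in>G. \<exists>j\<in>G. c \<le> z i \<and> z j < c \<and> z i - z j \<le> b)"
  shows "\<forall>i\<in>G. \<forall>j\<in>G. z i - z j \<le> card G * b"
  using assms
proof (induction "card G" arbitrary: G rule: less_induct)
  case less
  show ?case
  proof (cases "G = {}")
    case True then show ?thesis by simp
  next
    case ne: False
    define M where "M = Max (z ` G)"
    have leM: "\<And>i. i \<in> G \<Longrightarrow> z i \<le> M" unfolding M_def using less.prems(1) by simp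
    have "M \<in> z ` G" unfolding M_def using Max_in[of "z ` G"] less.prems(1) ne by blast
    then obtain im where im: "im \<in> G" "z im = M" by blast
    define G' where "G' = {i \<in> G. z i < M}"
    show ?thesis
    proof (cases "G' = {}")
      case True
      then have "\<And>i. i \<in> G \<Longrightarrow> z i = M" using leM unfolding G'_def by force
      then show ?thesis using bpos by simp
    next
      case ne': False
      have fG': "finite G'" using less.prems(1) unfolding G'_def by simp
      have sub: "G' \<subseteq> G" "im \<notin> G'" using im unfolding G'_def by auto
      have cardlt: "card G' < card G" using psubset_card_mono[OF less.prems(1)] sub im(1) by blast
      have QG': "\<exists>i\<in>G'. \<exists>j\<in>G'. c \<le> z i \<and> z j < c \<and> z i - z j \<le> b"
        if h1: "\<exists>i\<in>G'. c \<le> z i" and h2: "\<exists>j\<in>G'. z j < c" for c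
      proof -
        obtain i1 where i1: "i1 \<in> G'" "c \<le> z i1" using h1 by blast
        obtain i0 j0 where ij0: "i0 \<in> G" "j0 \<in> G" "c \<le> z i0" "z j0 < c" "z i0 - z j0 \<le> b"
          using less.prems(2)[of c] h1 h2 sub by blast
        have j0: "j0 \<in> G'" using ij0 i1 leM unfolding G'_def by force
        show ?thesis
        proof (cases "i0 \<in> G'")
          case True then show ?thesis using ij0 j0 by blast
        next
          case False
          then have "z i0 = M" using ij0(1) leM unfolding G'_def by force
          moreover have "z i1 \<le> M" using i1 sub leM by blast
          ultimately show ?thesis using i1 j0 ij0 by (intro bexI[of _ i1] bexI[of _ j0]) auto
        qed
      qed
      have IH: "\<forall>i\<in>G'. \<forall>j\<in>G'. z i - z j \<le> card G' * b"
        using less.hyps[OF cardlt fG'] QG' by blast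
      obtain j1 where j1: "j1 \<in> G'" using ne' by blast
      obtain i0 j0 where ij0: "i0 \<in> G" "j0 \<in> G" "M \<le> z i0" "z j0 < M" "z i0 - z j0 \<le> b"
        using less.prems(2)[of M] im j1 sub unfolding G'_def by force
      have j0G': "j0 \<in> G'" using ij0 unfolding G'_def by auto
      have Mj0: "M - z j0 \<le> b" using ij0 leM[OF ij0(1)] by linarith
      have cb: "real (card G') * b + b \<le> real (card G) * b"
      proof -
        have "real (card G') + 1 \<le> real (card G)" using cardlt by linarith
        then show ?thesis using bpos by (metis distrib_right mult_1 mult_right_mono less_imp_le)
      qed
      show ?thesis
      proof (intro ballI)
        fix i j assume ij: "i \<in> G" "j \<in> G"
        show "z i - z j \<le> card G * b"
        proof (cases "j \<in> G'")
          case True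
          have "z j0 - z j \<le> card G' * b" using IH j0G' True by blast
          then show ?thesis using leM[OF ij(1)] Mj0 cb by linarith
        next
          case False
          then have "z j = M" using ij(2) leM unfolding G'_def by force
          then have "z i - z j \<le> 0" using leM[OF ij(1)] by linarith
          moreover have "0 \<le> real (card G) * b" using bpos by simp
          ultimately show ?thesis by linarith
        qed
      qed
    qed
  qed
qed

lemma spread:
  assumes "finite J" "J \<noteq> {}" "i \<in> top z J" "j \<in> top z J"
  shows "z i - z j \<le> card (top z J) * b"
proof -
  let ?G = "top z J"
  note tp = top_props[OF assms(1,2), where x=z]
  have fG: "finite ?G" by (rule finite_subset[OF tp(1) assms(1)])
  have "\<forall>i\<in>?G. \<forall>j\<in>?G. z i - z j \<le> card ?G * b"
  proof (rule gap[OF fG])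
    fix c assume h1: "\<exists>i\<in>?G. c \<le> z i" and h2: "\<exists>j\<in>?G. z j < c"
    show "\<exists>i\<in>?G. \<exists>j\<in>?G. c \<le> z i \<and> z j < c \<and> z i - z j \<le> b"
    proof (rule ccontr)
      assume nb: "\<not> ?thesis"
      define U where "U = {i \<in> ?G. c \<le> z i}"
      have U: "U \<subseteq> J" "U \<noteq> {}" using h1 tp(1) unfolding U_def by auto
      have "sep z J U" unfolding sep_def
      proof (intro ballI)
        fix i j assume ij: "i \<in> U" "j \<in> J - U"
        show "z i - z j > b"
        proof (cases "j \<in> ?G")
          case True
          then have "z j < c" using ij unfolding U_def by auto
          then show ?thesis using nb ij True unfolding U_def by force
        next
          case False
          then show ?thesis using tp(3) ij unfolding sep_def U_def by blast
        qed
      qed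
      then have "?G \<subseteq> U" using tp(4)[OF U] by blast
      then show False using h2 unfolding U_def by force
    qed
  qed
  then show ?thesis using assms(3,4) by blast
qed


lemma ip_lincomb: "(\<Sum>t<n. u t * lincomb l v d t) = (\<Sum>j<l. d j * (\<Sum>t<n. u t * v j t))"
proof -
  have "(\<Sum>t<n. u t * lincomb l v d t) = (\<Sum>t<n. \<Sum>j<l. d j * (u t * v j t))"
    unfolding lincomb_def by (simp add: sum_distrib_left mult_ac)
  also have "\<dots> = (\<Sum>j<l. \<Sum>t<n. d j * (u t * v j t))" by (rule sum.swap)
  also have "\<dots> = (\<Sum>j<l. d j * (\<Sum>t<n. u t * v j t))" by (simp add: sum_distrib_left)
  finally show ?thesis .
qed

lemma lincomb_ip: "(\<Sum>t<n. lincomb l v d t * w t) = (\<Sum>j<l. d j * (\<Sum>t<n. v j t * w t))"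
  using ip_lincomb[where n=n and u=w and l=l and v=v and d=d] by (simp add: mult.commute)

lemma sqrt_le_self1: "0 \<le> s \<Longrightarrow> sqrt s \<le> s + 1"
proof -
  assume s: "0 \<le> s"
  have "s \<le> (s + 1)^2" using s by (simp add: power2_eq_square algebra_simps)
  then have "sqrt s \<le> sqrt ((s + 1)^2)" by (rule real_sqrt_le_mono)
  then show ?thesis using s by simp
qed

lemma coord_le_edist: "t < n \<Longrightarrow> \<bar>z t - w t\<bar> \<le> edist n z w"
proof -
  assume t: "t < n"
  have "(z t - w t)^2 \<le> (\<Sum>i<n. (z i - w i)^2)"
    by (rule member_le_sum[of t "{..<n}" "\<lambda>i. (z i - w i)^2"]) (use t in auto)
  then have "sqrt ((z t - w t)^2) \<le> sqrt (\<Sum>i<n. (z i - w i)^2)" by (rule real_sqrt_le_mono)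
  then show ?thesis unfolding edist_def by simp
qed

lemma shift_in_K:
  assumes xc: "x \<in> complement A n" and s: "s \<ge> 0"
  shows "(\<lambda>i. x i - s * (if i \<in> Tseq x {..<n} m then 1 else 0)) \<in> K n x"
proof -
  let ?I = "{..<n}"
  let ?T = "Tseq x ?I m"
  let ?z = "\<lambda>i. x i - s * (if i \<in> ?T then 1 else 0)"
  have TI: "?T \<subseteq> ?I" by (rule Tseq_sub)
  have xR: "x \<in> Rn n" and gx: "gd ?I x" using xc unfolding compl_eq by auto
  have key: "(?z i - ?z j > a \<longleftrightarrow> x i - x j > a) \<and> ?z i - ?z j \<noteq> a"
    if ij: "i < n" "j < n" "i \<noteq> j" and a: "a \<in> A" for i j a
  proof -
    have nd: "x i - x j \<noteq> a" using gx ij a unfolding gd_def by auto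
    have ab: "0 < a" "a \<le> b" using Apos[OF a] by auto
    consider "i \<in> ?T \<longleftrightarrow> j \<in> ?T" | "i \<notin> ?T" "j \<in> ?T" | "i \<in> ?T" "j \<notin> ?T" by blast
    then show ?thesis
    proof cases
      case 1
      then have e: "?z i - ?z j = x i - x j" by (cases "j \<in> ?T") auto
      show ?thesis unfolding e using nd by blast
    next
      case 2
      have "x i - x j > b" using lower_Tseq[of ?I i x m j] 2 ij by auto
      moreover have "?z i - ?z j = x i - x j + s" using 2 by simp
      ultimately show ?thesis using ab s by auto
    next
      case 3
      have "x j - x i > b" using lower_Tseq[of ?I j x m i] 3 ij by auto
      moreover have "?z i - ?z j = x i - x j - s" using 3 by simp
      ultimately show ?thesis using ab s by auto
    qed
  qed
  have "?z \<in> Rn n" using xR TI unfolding Rn_def by auto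
  moreover have "gd ?I ?z" unfolding gd_def
  proof (intro ballI impI notI)
    fix i j assume h: "i \<in> ?I" "j \<in> ?I" "i \<noteq> j" "?z i - ?z j \<in> A"
    have "?z i - ?z j \<noteq> ?z i - ?z j" using key[of i j "?z i - ?z j"] h by blast
    then show False by blast
  qed
  moreover have "pat ?I ?z = pat ?I x"
  proof (rule set_eqI)
    fix w :: "nat \<times> nat \<times> real"
    obtain i j a where w: "w = (i, j, a)" by (metis prod_cases3)
    have "(i < n \<and> j < n \<and> i \<noteq> j \<and> a \<in> A \<and> ?z i - ?z j > a) \<longleftrightarrow> (i < n \<and> j < n \<and> i \<noteq> j \<and> a \<in> A \<and> x i - x j > a)"
      using key[of i j a] by blast
    then show "w \<in> pat ?I ?z \<longleftrightarrow> w \<in> pat ?I x" unfolding w pat_def by simp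
  qed
  ultimately show ?thesis unfolding K_def compl_eq by auto
qed


context
  fixes n :: nat and x :: "nat \<Rightarrow> real" and k :: nat
  assumes xc: "x \<in> complement A n" and cl: "clus x {..<n} k"
begin

abbreviation "TT m \<equiv> Tseq x {..<n} m"
abbreviation "GG m \<equiv> top x (TT m)"

lemma TT_ne: "m < k \<Longrightarrow> TT m \<noteq> {}"
  using cl unfolding clus_def by blast

lemma TT_k: "TT k = {}"
  using cl unfolding clus_def by blast

lemma TT_fin: "finite (TT m)"
  by (rule finite_subset[OF Tseq_sub]) simp

lemma GG_props: "m < k \<Longrightarrow> GG m \<subseteq> TT m \<and> GG m \<noteq> {}"
  using top_props[OF TT_fin TT_ne, where x=x] by blast

lemma GG_sub: "m < k \<Longrightarrow> GG m \<subseteq> {..<n}"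
  using GG_props Tseq_sub by blast

lemma TT_Suc: "TT (Suc m) = TT m - GG m"
  by simp

lemma GG_disj: "m < k \<Longrightarrow> m' < k \<Longrightarrow> i \<in> GG m \<Longrightarrow> m' \<noteq> m \<Longrightarrow> i \<notin> GG m'"
proof -
  assume h: "m < k" "m' < k" "i \<in> GG m" "m' \<noteq> m"
  show "i \<notin> GG m'"
  proof (cases "m < m'")
    case True
    have "GG m' \<subseteq> TT m'" using GG_props[OF h(2)] by blast
    also have "\<dots> \<subseteq> TT (Suc m)" using True by (intro Tseq_anti) simp
    finally show ?thesis using h(3) by auto
  next
    case False
    then have "Suc m' \<le> m" using h(4) by simp
    then have "TT m \<subseteq> TT (Suc m')" by (rule Tseq_anti)
    moreover have "i \<in> TT m" using GG_props[OF h(1)] h(3) by blast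
    ultimately show ?thesis by auto
  qed
qed

lemma GG_cover: "i < n \<Longrightarrow> \<exists>m<k. i \<in> GG m"
proof -
  assume i: "i < n"
  obtain m where m: "m < k" "i \<in> TT m" "i \<notin> TT (Suc m)"
    using ex_step[of "\<lambda>m. i \<in> TT m" k] i TT_k by auto
  then show ?thesis by auto
qed

definition pt :: "nat \<Rightarrow> nat" where "pt m = (SOME p. p \<in> GG m)"

lemma pt_in: "m < k \<Longrightarrow> pt m \<in> GG m"
  unfolding pt_def using GG_props by (metis all_not_in_conv someI)

lemma K_same: "z \<in> K n x \<Longrightarrow> Tseq z {..<n} m = TT m \<and> top z (TT m) = GG m"
proof -
  assume "z \<in> K n x"
  then have p: "pat {..<n} z = pat {..<n} x" unfolding K_def by auto
  show ?thesis using pat_Tseq[OF p, of m] pat_top[OF p Tseq_sub] by simp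
qed

definition gg :: "nat \<Rightarrow> nat \<Rightarrow> real" where
  "gg m = (\<lambda>i. if i \<in> GG m then 1 else 0)"

lemma lin_gg: "m0 < k \<Longrightarrow> i \<in> GG m0 \<Longrightarrow> lincomb k gg c i = c m0"
proof -
  assume h: "m0 < k" "i \<in> GG m0"
  have "lincomb k gg c i = (\<Sum>m<k. if m = m0 then c m0 else 0)"
    unfolding lincomb_def
  proof (rule sum.cong[OF refl])
    fix m assume "m \<in> {..<k}"
    then show "c m * gg m i = (if m = m0 then c m0 else 0)"
      using GG_disj[OF h(1) _ h(2), of m] h unfolding gg_def by auto
  qed
  also have "\<dots> = c m0" using h(1) by simp
  finally show ?thesis .
qed

lemma lin_gg_out: "\<not> i < n \<Longrightarrow> lincomb k gg c i = 0"
  unfolding lincomb_def gg_def using GG_sub by (intro sum.neutral) auto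

lemma level_upper: "\<exists>W r. is_subspace_dim n k W \<and> r > 0 \<and> (\<forall>z\<in>K n x. \<exists>w\<in>W. edist n z w \<le> r)"
proof (intro exI conjI)
  show "is_subspace_dim n k (range (lincomb k gg))"
    unfolding is_subspace_dim_def
  proof (intro exI conjI)
    show "\<forall>j<k. gg j \<in> Rn n" unfolding Rn_def gg_def using GG_sub by fastforce
    show "\<forall>c. lincomb k gg c = (\<lambda>_. 0) \<longrightarrow> (\<forall>j<k. c j = 0)"
    proof (intro allI impI)
      fix c j assume h: "lincomb k gg c = (\<lambda>_. 0)" "j < k"
      have "c j = lincomb k gg c (pt j)" using lin_gg[OF h(2) pt_in[OF h(2)]] by simp
      then show "c j = 0" using h(1) by simp
    qed
  qed simp
  let ?D = "real n * b"
  show "real n * ?D^2 + 1 > 0" by (simp add: add_nonneg_pos)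
  show "\<forall>z\<in>K n x. \<exists>w\<in>range (lincomb k gg). edist n z w \<le> real n * ?D^2 + 1"
  proof
    fix z assume z: "z \<in> K n x"
    have zR: "z \<in> Rn n" using z unfolding K_def compl_eq by auto
    let ?w = "lincomb k gg (\<lambda>m. z (pt m))"
    have close: "\<bar>z i - ?w i\<bar> \<le> ?D" if i: "i < n" for i
    proof -
      obtain m0 where m0: "m0 < k" "i \<in> GG m0" using GG_cover[OF i] by blast
      have w: "?w i = z (pt m0)" by (rule lin_gg[OF m0])
      have tz: "top z (TT m0) = GG m0" using K_same[OF z] by simp
      have ne: "TT m0 \<noteq> {}" by (rule TT_ne[OF m0(1)])
      have p: "pt m0 \<in> top z (TT m0)" using pt_in[OF m0(1)] tz by simp
      have i': "i \<in> top z (TT m0)" using m0(2) tz by simp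
      have c1: "z i - z (pt m0) \<le> card (GG m0) * b" using spread[OF TT_fin ne i' p] tz by simp
      have c2: "z (pt m0) - z i \<le> card (GG m0) * b" using spread[OF TT_fin ne p i'] tz by simp
      have "card (GG m0) \<le> card {..<n}" using GG_sub[OF m0(1)] by (intro card_mono) auto
      then have "real (card (GG m0)) * b \<le> real n * b" using bpos by simp
      then show ?thesis using c1 c2 w by linarith
    qed
    have "(\<Sum>i<n. (z i - ?w i)^2) \<le> (\<Sum>i<n. ?D^2)"
    proof (rule sum_mono)
      fix i assume "i \<in> {..<n}"
      then have "\<bar>z i - ?w i\<bar> \<le> ?D" using close by simp
      then have "\<bar>z i - ?w i\<bar>^2 \<le> ?D^2" by (rule power_mono) simp
      then show "(z i - ?w i)^2 \<le> ?D^2" by simp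
    qed
    then have le: "(\<Sum>i<n. (z i - ?w i)^2) \<le> real n * ?D^2" by simp
    have "edist n z ?w \<le> (\<Sum>i<n. (z i - ?w i)^2) + 1"
      unfolding edist_def by (rule sqrt_le_self1) (simp add: sum_nonneg)
    then have "edist n z ?w \<le> real n * ?D^2 + 1" using le by linarith
    then show "\<exists>w\<in>range (lincomb k gg). edist n z w \<le> real n * ?D^2 + 1" by blast
  qed
qed

definition ff :: "nat \<Rightarrow> nat \<Rightarrow> real" where
  "ff m = (\<lambda>i. if i \<in> TT m then 1 else 0)"

lemma level_lower:
  assumes lk: "l < k"
  shows "\<not> (\<exists>W r. is_subspace_dim n l W \<and> r > 0 \<and> (\<forall>z\<in>K n x. \<exists>w\<in>W. edist n z w \<le> r))"
proof
  assume "\<exists>W r. is_subspace_dim n l W \<and> r > 0 \<and> (\<forall>z\<in>K n x. \<exists>w\<in>W. edist n z w \<le> r)"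
  then obtain W r where W: "is_subspace_dim n l W" and r: "r > 0" and bd: "\<forall>z\<in>K n x. \<exists>w\<in>W. edist n z w \<le> r"
    by blast
  obtain v where v: "W = range (lincomb l v)" using W unfolding is_subspace_dim_def by blast
  define ip where "ip = (\<lambda>(u::nat\<Rightarrow>real) w. \<Sum>t<n. u t * w t)"
  obtain c where c: "\<exists>m\<in>{..<k}. c m \<noteq> 0" "\<forall>i<l. (\<Sum>m\<in>{..<k}. ip (ff m) (v i) * c m) = 0"
    using homog[of "{..<k}" l "\<lambda>i m. ip (ff m) (v i)"] lk by auto
  define u where "u = lincomb k ff c"
  have ipu: "ip u w' = (\<Sum>m<k. c m * ip (ff m) w')" for w'
    unfolding u_def ip_def by (rule lincomb_ip)
  have uv: "ip u (v i) = 0" if "i < l" for i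
    using c(2) that unfolding ipu by (simp add: mult.commute)
  have uW: "ip u w = 0" if wW: "w \<in> W" for w
  proof -
    obtain d where "w = lincomb l v d" using wW v by blast
    then have "ip u w = (\<Sum>j<l. d j * ip u (v j))" unfolding ip_def by (simp add: ip_lincomb)
    also have "\<dots> = 0" using uv by simp
    finally show ?thesis .
  qed
  define S where "S = (\<Sum>t<n. \<bar>u t\<bar>)"
  have bound: "\<bar>ip u z\<bar> \<le> r * S" if z: "z \<in> K n x" for z
  proof -
    obtain w where w: "w \<in> W" "edist n z w \<le> r" using bd z by blast
    have "ip u z = ip u z - ip u w" using uW[OF w(1)] by simp
    also have "\<dots> = (\<Sum>t<n. u t * (z t - w t))"
      unfolding ip_def by (simp add: sum_subtractf right_diff_distrib)
    finally have e: "ip u z = (\<Sum>t<n. u t * (z t - w t))" .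
    have "\<bar>\<Sum>t<n. u t * (z t - w t)\<bar> \<le> (\<Sum>t<n. \<bar>u t * (z t - w t)\<bar>)" by (rule sum_abs)
    also have "\<dots> \<le> (\<Sum>t<n. \<bar>u t\<bar> * r)"
    proof (rule sum_mono)
      fix t assume "t \<in> {..<n}"
      then have "\<bar>z t - w t\<bar> \<le> r" using coord_le_edist[of t n z w] w(2) by simp
      then show "\<bar>u t * (z t - w t)\<bar> \<le> \<bar>u t\<bar> * r" by (simp add: abs_mult mult_left_mono)
    qed
    also have "\<dots> = r * S" unfolding S_def by (simp add: sum_distrib_left mult.commute)
    finally show ?thesis using e by simp
  qed
  have uf: "ip u (ff m) = 0" if m: "m < k" for m
  proof (rule ccontr)
    let ?al = "ip u (ff m)" and ?be = "ip u x"
    assume al: "?al \<noteq> 0"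
    define s where "s = (r * S + \<bar>?be\<bar> + 1) / \<bar>?al\<bar>"
    have S0: "S \<ge> 0" unfolding S_def by (simp add: sum_nonneg)
    have s0: "s \<ge> 0" unfolding s_def using r S0 by simp
    have sal: "\<bar>s * ?al\<bar> = r * S + \<bar>?be\<bar> + 1" unfolding s_def using al r S0
      by (simp add: abs_mult)
    have zin: "(\<lambda>i. x i - s * ff m i) \<in> K n x" using shift_in_K[OF xc s0, of m] unfolding ff_def by simp
    have "ip u (\<lambda>i. x i - s * ff m i) = ?be - s * ?al"
      unfolding ip_def by (simp add: sum_subtractf right_diff_distrib sum_distrib_left mult_ac)
    then have "\<bar>?be - s * ?al\<bar> \<le> r * S" using bound[OF zin] by simp
    moreover have "\<bar>?be - s * ?al\<bar> \<ge> \<bar>s * ?al\<bar> - \<bar>?be\<bar>" by linarith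
    ultimately show False using sal by linarith
  qed
  have sym: "ip w1 w2 = ip w2 w1" for w1 w2 unfolding ip_def by (simp add: mult.commute)
  have "ip u u = (\<Sum>m<k. c m * ip (ff m) u)" by (rule ipu)
  also have "\<dots> = 0" by (rule sum.neutral) (use uf sym in simp)
  finally have "ip u u = 0" .
  then have u0: "\<forall>t\<in>{..<n}. u t * u t = 0"
    unfolding ip_def by (subst sum_nonneg_eq_0_iff[symmetric]) auto
  define m0 where "m0 = (LEAST m. c m \<noteq> 0)"
  obtain m1 where m1: "m1 < k" "c m1 \<noteq> 0" using c(1) by auto
  have cm0: "c m0 \<noteq> 0" unfolding m0_def by (rule LeastI[of _ m1]) (rule m1(2))
  have m0k: "m0 < k" using Least_le[of "\<lambda>m. c m \<noteq> 0" m1] m1 unfolding m0_def by simp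
  have below: "\<And>m. m < m0 \<Longrightarrow> c m = 0" unfolding m0_def using not_less_Least by blast
  let ?p = "pt m0"
  have pG: "?p \<in> GG m0" by (rule pt_in[OF m0k])
  have pn: "?p < n" using GG_sub[OF m0k] pG by auto
  have pT: "?p \<in> TT m0" using GG_props[OF m0k] pG by blast
  have "u ?p = (\<Sum>m<k. if m = m0 then c m0 else 0)"
    unfolding u_def lincomb_def
  proof (rule sum.cong[OF refl])
    fix m assume "m \<in> {..<k}"
    show "c m * ff m ?p = (if m = m0 then c m0 else 0)"
    proof (cases "m < m0")
      case True then show ?thesis using below by simp
    next
      case False
      show ?thesis
      proof (cases "m = m0")
        case True then show ?thesis using pT unfolding ff_def by simp
      next
        case False
        then have "Suc m0 \<le> m" using \<open>\<not> m < m0\<close> by simp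
        then have "TT m \<subseteq> TT (Suc m0)" by (rule Tseq_anti)
        then have "?p \<notin> TT m" using pG by auto
        then show ?thesis using False unfolding ff_def by simp
      qed
    qed
  qed
  also have "\<dots> = c m0" using m0k by simp
  finally have "u ?p = c m0" .
  moreover have "u ?p = 0" using u0 pn by simp
  ultimately show False using cm0 by simp
qed

lemma level_eq: "level n (K n x) = k"
  unfolding level_def
proof (rule Least_equality)
  show "\<exists>W r. is_subspace_dim n k W \<and> r > 0 \<and> (\<forall>z\<in>K n x. \<exists>w\<in>W. edist n z w \<le> r)"
    by (rule level_upper)
  fix l assume "\<exists>W r. is_subspace_dim n l W \<and> r > 0 \<and> (\<forall>z\<in>K n x. \<exists>w\<in>W. edist n z w \<le> r)"
  then show "k \<le> l" using level_lower by (meson not_le)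
qed

end

lemma r_level_cnt: "r_level A l n = cnt l n"
proof -
  let ?I = "{..<n}"
  let ?C = "complement A n"
  define psi where "psi p = {y \<in> ?C. pat ?I y = p}" for p
  define ext where "ext y = (\<lambda>i. if i < n then y i else 0)" for y :: "nat \<Rightarrow> real"
  have ext: "ext y \<in> ?C" "pat ?I (ext y) = pat ?I y" if "gd ?I y" for y
  proof -
    have "pat ?I (ext y) = pat ?I y" by (rule eqon_pat) (simp add: ext_def)
    moreover have "gd ?I (ext y)" using that unfolding gd_def ext_def by auto
    moreover have "ext y \<in> Rn n" unfolding Rn_def ext_def by auto
    ultimately show "ext y \<in> ?C" "pat ?I (ext y) = pat ?I y" unfolding compl_eq by auto
  qed
  have psiK: "psi (pat ?I x) = K n x" for x unfolding psi_def K_def by simp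
  have "{R \<in> regions A n. level n R = l} = psi ` Q ?I l"
  proof (intro equalityI subsetI)
    fix R assume "R \<in> {R \<in> regions A n. level n R = l}"
    then obtain x where x: "x \<in> ?C" "R = connected_component_set ?C x" "level n R = l"
      unfolding regions_def by blast
    have RK: "R = K n x" using comp_eq[OF x(1)] x(2) by simp
    obtain k where k: "clus x ?I k" using clus_ex by blast
    have "k = l" using level_eq[OF x(1) k] RK x(3) by simp
    moreover have "gd ?I x" using x(1) unfolding compl_eq by auto
    ultimately have "pat ?I x \<in> Q ?I l" unfolding Q_def using k by blast
    then show "R \<in> psi ` Q ?I l" using RK psiK by blast
  next
    fix R assume "R \<in> psi ` Q ?I l"
    then obtain y where y: "R = psi (pat ?I y)" "gd ?I y" "clus y ?I l" unfolding Q_def by blast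
    note e = ext[OF y(2)]
    have cx: "clus (ext y) ?I l" using pat_clus[OF e(2)] y(3) by simp
    have RK: "R = K n (ext y)" using y(1) e(2) psiK[of "ext y"] by simp
    have "R \<in> regions A n" unfolding regions_def RK using comp_eq[OF e(1)] e(1) by blast
    moreover have "level n R = l" using level_eq[OF e(1) cx] RK by simp
    ultimately show "R \<in> {R \<in> regions A n. level n R = l}" by blast
  qed
  moreover have "inj_on psi (Q ?I l)"
  proof (rule inj_onI)
    fix p p' assume p: "p \<in> Q ?I l" and p': "p' \<in> Q ?I l" and eq: "psi p = psi p'"
    obtain y where y: "p = pat ?I y" "gd ?I y" using p unfolding Q_def by blast
    note e = ext[OF y(2)]
    have "ext y \<in> psi p" unfolding psi_def using e y(1) by simp
    then have "ext y \<in> psi p'" using eq by simp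
    then show "p = p'" unfolding psi_def using e y(1) by simp
  qed
  ultimately show ?thesis unfolding r_level_def cnt_def by (simp add: card_image)
qed

lemma Fstar_eq: "Fstar A l = Fc l"
  unfolding Fstar_def Fc_def r_level_cnt ..

end

theorem theorem1p3:
  fixes A :: "real set" and l :: nat
  assumes "finite A" and "A \<noteq> {}" and "\<forall>a\<in>A. a > 0"
  shows "Fstar A l = (Fstar A 1) ^ l"
proof -
  have mx: "Max A \<in> A" using Max_in assms(1,2) by blast
  have le: "\<And>a. a \<in> A \<Longrightarrow> 0 < a \<and> a \<le> Max A" using assms(1,3) Max_ge by blast
  interpret semi A "Max A"
    by (rule semi.intro[OF assms(1) mx le])
  show ?thesis unfolding Fstar_eq by (rule Fc_pow)
qed

end
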